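(* Let $\theta:R\to S$ be a surjective ring homomorphism with $\theta(1)=1$ (so $\theta(C(R))\subseteq C(S)$), and let $g(x)=\sum_{i=0}^n a_ix^i\in C(R)[x]$. If $R$ is weakly $g(x)$-$r$-clean, then $S$ is weakly $\theta'(g(x))$-$r$-clean, where $\theta'(g(x))=\sum_{i=0}^n\theta(a_i)x^i\in C(S)[x]$.
   Context: Rings are associative with identity; $C(R)$ is the center of $R$ and $Reg(R)=\{r: r=ryr \text{ for some } y\in R\}$. For a fixed $g(x)\in C(R)[x]$, an element $z\in R$ is weakly $g(x)$-$r$-clean if $z=r+s$ or $z=r-s$ with $r\in Reg(R)$ and $g(s)=0$; $R$ is weakly $g(x)$-$r$-clean if all its elements are. *)

theory Defs
  imports "HOL-Algebra.Ring" "HOL-Algebra.RingHom"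
begin

definition ring_center :: "('a, 'm) ring_scheme \<Rightarrow> 'a set" where
  "ring_center R = {c \<in> carrier R. \<forall>x \<in> carrier R. c \<otimes>\<^bsub>R\<^esub> x = x \<otimes>\<^bsub>R\<^esub> c}"

definition Reg :: "('a, 'm) ring_scheme \<Rightarrow> 'a set" where
  "Reg R = {r \<in> carrier R. \<exists>y \<in> carrier R. r = r \<otimes>\<^bsub>R\<^esub> y \<otimes>\<^bsub>R\<^esub> r}"

text \<open>A polynomial g(x) = sum_{i=0}^n a_i x^i is given by its coefficient
  function a and the bound n; evaluation at s.\<close>
definition poly_eval :: "('a, 'm) ring_scheme \<Rightarrow> (nat \<Rightarrow> 'a) \<Rightarrow> nat \<Rightarrow> 'a \<Rightarrow> 'a" where
  "poly_eval R a n s = (\<Oplus>\<^bsub>R\<^esub> i \<in> {..n}. a i \<otimes>\<^bsub>R\<^esub> (s [^]\<^bsub>R\<^esub> i))"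

definition weakly_g_r_clean_elem ::
  "('a, 'm) ring_scheme \<Rightarrow> (nat \<Rightarrow> 'a) \<Rightarrow> nat \<Rightarrow> 'a \<Rightarrow> bool" where
  "weakly_g_r_clean_elem R a n z \<longleftrightarrow>
     (\<exists>r \<in> Reg R. \<exists>s \<in> carrier R. poly_eval R a n s = \<zero>\<^bsub>R\<^esub> \<and>
        (z = r \<oplus>\<^bsub>R\<^esub> s \<or> z = r \<ominus>\<^bsub>R\<^esub> s))"

definition weakly_g_r_clean :: "('a, 'm) ring_scheme \<Rightarrow> (nat \<Rightarrow> 'a) \<Rightarrow> nat \<Rightarrow> bool" where
  "weakly_g_r_clean R a n \<longleftrightarrow> (\<forall>z \<in> carrier R. weakly_g_r_clean_elem R a n z)"

end

theory Submission
  imports Defs "HOL-Algebra.UnivPoly"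
begin

theorem proposition3p2:
  fixes R :: "('a, 'm) ring_scheme" and S :: "('b, 'n) ring_scheme"
    and \<theta> :: "'a \<Rightarrow> 'b" and a :: "nat \<Rightarrow> 'a" and n :: nat
  assumes "ring R" and "ring S"
    and "\<theta> \<in> ring_hom R S"
    and "\<theta> ` carrier R = carrier S"
    and "\<forall>i \<le> n. a i \<in> ring_center R"
    and "weakly_g_r_clean R a n"
  shows "weakly_g_r_clean S (\<lambda>i. \<theta> (a i)) n"
proof -
  interpret h: ring_hom_ring R S \<theta>
    using assms(1-3) by (simp add: ring_hom_ring_def ring_hom_ring_axioms_def)
  have ac: "\<And>i. i \<in> {..n} \<Longrightarrow> a i \<in> carrier R"
    using assms(5) by (auto simp: ring_center_def)
  have ev: "\<theta> (poly_eval R a n s) = poly_eval S (\<lambda>i. \<theta> (a i)) n (\<theta> s)" if s: "s \<in> carrier R" for s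
  proof -
    have f: "(\<lambda>i. a i \<otimes>\<^bsub>R\<^esub> s [^]\<^bsub>R\<^esub> i) \<in> {..n} \<rightarrow> carrier R"
      using ac s by auto
    have "\<theta> (poly_eval R a n s) = (\<Oplus>\<^bsub>S\<^esub> i \<in> {..n}. \<theta> (a i \<otimes>\<^bsub>R\<^esub> s [^]\<^bsub>R\<^esub> i))"
      unfolding poly_eval_def by (subst h.hom_finsum[OF f]) (simp only: comp_def)
    also have "\<dots> = poly_eval S (\<lambda>i. \<theta> (a i)) n (\<theta> s)"
      unfolding poly_eval_def
    proof (rule h.S.finsum_cong')
      show "{..n} = {..n}" by (rule refl)
      show "(\<lambda>i. \<theta> (a i) \<otimes>\<^bsub>S\<^esub> \<theta> s [^]\<^bsub>S\<^esub> i) \<in> {..n} \<rightarrow> carrier S"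
        proof
        fix i assume "i \<in> {..n}"
        then have ai: "a i \<in> carrier R" by (rule ac)
        show "\<theta> (a i) \<otimes>\<^bsub>S\<^esub> \<theta> s [^]\<^bsub>S\<^esub> i \<in> carrier S"
          by (rule h.S.m_closed[OF h.hom_closed[OF ai] h.S.nat_pow_closed[OF h.hom_closed[OF s]]])
      qed
      fix i assume i: "i \<in> {..n}"
      have ai: "a i \<in> carrier R" using ac[OF i] .
      have p: "s [^]\<^bsub>R\<^esub> i \<in> carrier R" using h.R.nat_pow_closed[OF s] .
      have e1: "\<theta> (a i \<otimes>\<^bsub>R\<^esub> s [^]\<^bsub>R\<^esub> i) = \<theta> (a i) \<otimes>\<^bsub>S\<^esub> \<theta> (s [^]\<^bsub>R\<^esub> i)"
        using h.hom_mult[OF ai p] .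
      have e2: "\<theta> (s [^]\<^bsub>R\<^esub> i) = \<theta> s [^]\<^bsub>S\<^esub> i"
        using h.hom_nat_pow[OF s] .
      show "\<theta> (a i \<otimes>\<^bsub>R\<^esub> s [^]\<^bsub>R\<^esub> i) = \<theta> (a i) \<otimes>\<^bsub>S\<^esub> \<theta> s [^]\<^bsub>S\<^esub> i"
        using e1 e2 by (rule trans[OF _ arg_cong[where f="\<lambda>t. \<theta> (a i) \<otimes>\<^bsub>S\<^esub> t"]])
    qed
    finally show ?thesis .
  qed
  show ?thesis
    unfolding weakly_g_r_clean_def
  proof
    fix z assume "z \<in> carrier S"
    then have "z \<in> \<theta> ` carrier R" using assms(4) by simp
    then obtain x where x: "x \<in> carrier R" "z = \<theta> x" by (rule imageE) simp
    have "weakly_g_r_clean_elem R a n x" using assms(6) x(1) unfolding weakly_g_r_clean_def by (rule bspec)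
    then have "\<exists>r \<in> Reg R. \<exists>s \<in> carrier R. poly_eval R a n s = \<zero>\<^bsub>R\<^esub> \<and>
        (x = r \<oplus>\<^bsub>R\<^esub> s \<or> x = r \<ominus>\<^bsub>R\<^esub> s)"
      unfolding weakly_g_r_clean_elem_def .
    then obtain r where r: "r \<in> Reg R" and exs: "\<exists>s \<in> carrier R. poly_eval R a n s = \<zero>\<^bsub>R\<^esub> \<and>
        (x = r \<oplus>\<^bsub>R\<^esub> s \<or> x = r \<ominus>\<^bsub>R\<^esub> s)" by (rule bexE)
    from exs obtain s where s: "s \<in> carrier R" and pd: "poly_eval R a n s = \<zero>\<^bsub>R\<^esub> \<and>
        (x = r \<oplus>\<^bsub>R\<^esub> s \<or> x = r \<ominus>\<^bsub>R\<^esub> s)" by (rule bexE)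
    from pd have p: "poly_eval R a n s = \<zero>\<^bsub>R\<^esub>" by (rule conjunct1)
    from pd have d: "x = r \<oplus>\<^bsub>R\<^esub> s \<or> x = r \<ominus>\<^bsub>R\<^esub> s" by (rule conjunct2)
    from r have rr: "r \<in> carrier R \<and> (\<exists>y\<in>carrier R. r = r \<otimes>\<^bsub>R\<^esub> y \<otimes>\<^bsub>R\<^esub> r)"
      unfolding Reg_def by (rule CollectD)
    then have ex: "\<exists>y\<in>carrier R. r = r \<otimes>\<^bsub>R\<^esub> y \<otimes>\<^bsub>R\<^esub> r" by (rule conjunct2)
    from rr have rc: "r \<in> carrier R" by (rule conjunct1)
    from ex obtain y where yc: "y \<in> carrier R" and ye: "r = r \<otimes>\<^bsub>R\<^esub> y \<otimes>\<^bsub>R\<^esub> r" by (rule bexE)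
    note y = rc yc ye
    have "\<theta> r = \<theta> r \<otimes>\<^bsub>S\<^esub> \<theta> y \<otimes>\<^bsub>S\<^esub> \<theta> r"
    proof -
      have "\<theta> (r \<otimes>\<^bsub>R\<^esub> y \<otimes>\<^bsub>R\<^esub> r) = \<theta> (r \<otimes>\<^bsub>R\<^esub> y) \<otimes>\<^bsub>S\<^esub> \<theta> r"
        using h.hom_mult[OF h.R.m_closed[OF y(1,2)] y(1)] .
      also have "\<theta> (r \<otimes>\<^bsub>R\<^esub> y) = \<theta> r \<otimes>\<^bsub>S\<^esub> \<theta> y"
        using h.hom_mult[OF y(1,2)] .
      finally have c: "\<theta> (r \<otimes>\<^bsub>R\<^esub> y \<otimes>\<^bsub>R\<^esub> r) = \<theta> r \<otimes>\<^bsub>S\<^esub> \<theta> y \<otimes>\<^bsub>S\<^esub> \<theta> r" .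
      show ?thesis using arg_cong[OF y(3), of \<theta>] c by (rule trans)
    qed
    then have "\<theta> r \<in> Reg S"
      unfolding Reg_def using y(1,2) h.hom_closed by blast
    moreover have "poly_eval S (\<lambda>i. \<theta> (a i)) n (\<theta> s) = \<zero>\<^bsub>S\<^esub>"
      using ev[OF s] p by simp
    moreover have "z = \<theta> r \<oplus>\<^bsub>S\<^esub> \<theta> s \<or> z = \<theta> r \<ominus>\<^bsub>S\<^esub> \<theta> s"
      using d
    proof
      assume h1: "x = r \<oplus>\<^bsub>R\<^esub> s"
      have "z = \<theta> r \<oplus>\<^bsub>S\<^esub> \<theta> s"
        unfolding x(2) h1 by (rule h.hom_add[OF y(1) s])
      then show ?thesis ..
    next
      assume h2: "x = r \<ominus>\<^bsub>R\<^esub> s"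
      have "z = \<theta> r \<oplus>\<^bsub>S\<^esub> \<theta> (\<ominus>\<^bsub>R\<^esub> s)"
        unfolding x(2) h2 a_minus_def by (rule h.hom_add[OF y(1) h.R.a_inv_closed[OF s]])
      also have "\<theta> (\<ominus>\<^bsub>R\<^esub> s) = \<ominus>\<^bsub>S\<^esub> \<theta> s" by (rule h.hom_a_inv[OF s])
      finally have "z = \<theta> r \<ominus>\<^bsub>S\<^esub> \<theta> s" unfolding a_minus_def .
      then show ?thesis ..
    qed
    ultimately show "weakly_g_r_clean_elem S (\<lambda>i. \<theta> (a i)) n z"
      unfolding weakly_g_r_clean_elem_def using h.hom_closed[OF s] by blast
  qed
qed

end
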